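(* Let $X,X',Y,Y'$ be nonnegative bivariate random vectors with absolutely continuous joint distribution functions $F,F',G,G'$, respectively, where for $i=1,2$, $Y_i=a_iX_i+c_i$ and $Y_i'=a_iX_i'+d_i$ with $a_i>0$ and $d_i\ge c_i>0$. Suppose $X\le_{CDCPE}X'$ and that either $\overline\varepsilon^*_i(X;t_1,t_2)$ (for $i=1,2$) or $\overline\varepsilon^*_i(X';t_1,t_2)$ (for $i=1,2$) is increasing in $t_1$ and increasing in $t_2$. Then $Y\le_{CDCPE}Y'$, i.e. $\overline\varepsilon^*_i(Y;t_1,t_2)\ge\overline\varepsilon^*_i(Y';t_1,t_2)$ for $i=1,2$ and all $t_1\ge d_1$, $t_2\ge d_2$ where defined.
   Context: For a nonnegative random vector $X$ with joint distribution function $F(x_1,x_2)=P(X_1\le x_1,X_2\le x_2)$ and $t_1,t_2>0$ with $F(t_1,t_2)>0$, the conditional dynamic cumulative past entropies (CDCPE) are $$\overline\varepsilon^*_1(X;t_1,t_2)=-\int_0^{t_1}\frac{F(x_1,t_2)}{F(t_1,t_2)}\log\frac{F(x_1,t_2)}{F(t_1,t_2)}dx_1,\qquad \overline\varepsilon^*_2(X;t_1,t_2)=-\int_0^{t_2}\frac{F(t_1,x_2)}{F(t_1,t_2)}\log\frac{F(t_1,x_2)}{F(t_1,t_2)}dx_2,$$ with $0\log0=0$. For nonnegative bivariate random vectors $X,Y$, we write $X\geq_{CDCPE}Y$ (equivalently $Y\le_{CDCPE}X$) if $\overline\varepsilon^*_i(X;t_1,t_2)\le\overline\varepsilon^*_i(Y;t_1,t_2)$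 for all $t_1,t_2\ge0$ (where defined) and $i=1,2$. *)

theory Defs
  imports "HOL-Probability.Probability"
begin

definition jdf :: "'a measure \<Rightarrow> ('a \<Rightarrow> real) \<Rightarrow> ('a \<Rightarrow> real) \<Rightarrow> real \<Rightarrow> real \<Rightarrow> real" where
  "jdf M X1 X2 x1 x2 = measure M {\<omega> \<in> space M. X1 \<omega> \<le> x1 \<and> X2 \<omega> \<le> x2}"

definition plogp :: "real \<Rightarrow> real" where
  "plogp u = (if u = 0 then 0 else u * ln u)"

definition cdcpe1 :: "(real \<Rightarrow> real \<Rightarrow> real) \<Rightarrow> real \<Rightarrow> real \<Rightarrow> real" where
  "cdcpe1 F t1 t2 = - integral {0..t1} (\<lambda>x1. plogp (F x1 t2 / F t1 t2))"

definition cdcpe2 :: "(real \<Rightarrow> real \<Rightarrow> real) \<Rightarrow> real \<Rightarrow> real \<Rightarrow> real" where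
  "cdcpe2 F t1 t2 = - integral {0..t2} (\<lambda>x2. plogp (F t1 x2 / F t1 t2))"

definition cdcpe_defined :: "(real \<Rightarrow> real \<Rightarrow> real) \<Rightarrow> real \<Rightarrow> real \<Rightarrow> bool" where
  "cdcpe_defined F t1 t2 \<longleftrightarrow> t1 > 0 \<and> t2 > 0 \<and> F t1 t2 > 0"

definition cdcpe_le :: "(real \<Rightarrow> real \<Rightarrow> real) \<Rightarrow> (real \<Rightarrow> real \<Rightarrow> real) \<Rightarrow> bool" where
  "cdcpe_le F F' \<longleftrightarrow> (\<forall>t1 t2. cdcpe_defined F t1 t2 \<longrightarrow> cdcpe_defined F' t1 t2 \<longrightarrow>
      cdcpe1 F' t1 t2 \<le> cdcpe1 F t1 t2 \<and> cdcpe2 F' t1 t2 \<le> cdcpe2 F t1 t2)"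

definition cdcpe_increasing :: "(real \<Rightarrow> real \<Rightarrow> real) \<Rightarrow> bool" where
  "cdcpe_increasing F \<longleftrightarrow>
     (\<forall>t1 t1' t2. t1 \<le> t1' \<longrightarrow> cdcpe_defined F t1 t2 \<longrightarrow> cdcpe_defined F t1' t2 \<longrightarrow>
        cdcpe1 F t1 t2 \<le> cdcpe1 F t1' t2 \<and> cdcpe2 F t1 t2 \<le> cdcpe2 F t1' t2) \<and>
     (\<forall>t1 t2 t2'. t2 \<le> t2' \<longrightarrow> cdcpe_defined F t1 t2 \<longrightarrow> cdcpe_defined F t1 t2' \<longrightarrow>
        cdcpe1 F t1 t2 \<le> cdcpe1 F t1 t2' \<and> cdcpe2 F t1 t2 \<le> cdcpe2 F t1 t2')"

end

theory Submission imports Defs begin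

lemma jdf_nonneg: "0 \<le> jdf M X1 X2 a b" by (simp add: jdf_def)

lemma jdf_le1: assumes "prob_space M" shows "jdf M X1 X2 a b \<le> 1"
proof -
  interpret prob_space M by fact
  show ?thesis by (simp add: jdf_def)
qed

lemma jdf_mono:
  assumes "prob_space M" "X1 \<in> borel_measurable M" "X2 \<in> borel_measurable M"
    "x1 \<le> y1" "x2 \<le> y2"
  shows "jdf M X1 X2 x1 x2 \<le> jdf M X1 X2 y1 y2"
proof -
  interpret prob_space M by fact
  have "{\<omega> \<in> space M. X1 \<omega> \<le> y1 \<and> X2 \<omega> \<le> y2} \<in> sets M" using assms(2,3) by measurable
  then show ?thesis unfolding jdf_def
    by (intro finite_measure_mono) (use assms(4,5) in auto)
qed

lemma jdf_swap: "jdf M X1 X2 a b = jdf M X2 X1 b a"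
  unfolding jdf_def by (simp add: conj_commute)

lemma cdcpe2_swap: "cdcpe2 F t1 t2 = cdcpe1 (\<lambda>a b. F b a) t2 t1"
  unfolding cdcpe1_def cdcpe2_def by simp

lemma cdcpe_le_swap: "cdcpe_le F F' \<Longrightarrow> cdcpe_le (\<lambda>a b. F b a) (\<lambda>a b. F' b a)"
  unfolding cdcpe_le_def cdcpe_defined_def cdcpe1_def cdcpe2_def by auto

lemma atom_null:
  fixes X1 X2 :: "'a \<Rightarrow> real" and x :: real
  assumes "prob_space N" "X1 \<in> borel_measurable N" "X2 \<in> borel_measurable N"
   "absolutely_continuous lborel (distr N lborel (\<lambda>\<omega>. (X1 \<omega>, X2 \<omega>)))"
  shows "measure N {\<omega>\<in>space N. X2 \<omega> = x} = 0" "measure N {\<omega>\<in>space N. X1 \<omega> = x} = 0"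
proof -
  have m: "(\<lambda>w. (X1 w, X2 w)) \<in> measurable N lborel"
    using assms(2,3) by measurable
  have n1: "(UNIV \<times> {x::real}) \<in> null_sets (lborel :: (real \<times> real) measure)"
  proof -
    have "(UNIV \<times> {x::real}) \<in> null_sets (lborel \<Otimes>\<^sub>M lborel)"
      by (auto simp: null_sets_def lborel.emeasure_pair_measure_Times)
    thus ?thesis by (simp add: lborel_prod)
  qed
  have n2: "({x::real} \<times> UNIV) \<in> null_sets (lborel :: (real \<times> real) measure)"
  proof -
    have "({x::real} \<times> UNIV) \<in> null_sets (lborel \<Otimes>\<^sub>M lborel)"
      by (auto simp: null_sets_def lborel.emeasure_pair_measure_Times)
    thus ?thesis by (simp add: lborel_prod)
  qed
  have "(UNIV \<times> {x}) \<in> null_sets (distr N lborel (\<lambda>\<omega>. (X1 \<omega>, X2 \<omega>)))"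
    using assms(4) n1 unfolding absolutely_continuous_def by auto
  moreover have "emeasure (distr N lborel (\<lambda>\<omega>. (X1 \<omega>, X2 \<omega>))) (UNIV \<times> {x}) = emeasure N ((\<lambda>\<omega>. (X1 \<omega>, X2 \<omega>)) -` (UNIV \<times> {x}) \<inter> space N)"
    by (rule emeasure_distr[OF m]) (use n1 in auto)
  ultimately have "emeasure N ((\<lambda>\<omega>. (X1 \<omega>, X2 \<omega>)) -` (UNIV \<times> {x}) \<inter> space N) = 0"
    by auto
  moreover have "(\<lambda>\<omega>. (X1 \<omega>, X2 \<omega>)) -` (UNIV \<times> {x}) \<inter> space N = {\<omega>\<in>space N. X2 \<omega> = x}" by auto
  ultimately show "measure N {\<omega>\<in>space N. X2 \<omega> = x} = 0" by (simp add: measure_def)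
  have "({x} \<times> UNIV) \<in> null_sets (distr N lborel (\<lambda>\<omega>. (X1 \<omega>, X2 \<omega>)))"
    using assms(4) n2 unfolding absolutely_continuous_def by auto
  moreover have "emeasure (distr N lborel (\<lambda>\<omega>. (X1 \<omega>, X2 \<omega>))) ({x} \<times> UNIV) = emeasure N ((\<lambda>\<omega>. (X1 \<omega>, X2 \<omega>)) -` ({x} \<times> UNIV) \<inter> space N)"
    by (rule emeasure_distr[OF m]) (use n2 in auto)
  ultimately have "emeasure N ((\<lambda>\<omega>. (X1 \<omega>, X2 \<omega>)) -` ({x} \<times> UNIV) \<inter> space N) = 0"
    by auto
  moreover have "(\<lambda>\<omega>. (X1 \<omega>, X2 \<omega>)) -` ({x} \<times> UNIV) \<inter> space N = {\<omega>\<in>space N. X1 \<omega> = x}" by auto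
  ultimately show "measure N {\<omega>\<in>space N. X1 \<omega> = x} = 0" by (simp add: measure_def)
qed

lemma plogp_le0: "0 \<le> r \<Longrightarrow> r \<le> 1 \<Longrightarrow> plogp r \<le> 0"
  unfolding plogp_def by (auto simp: mult_nonneg_nonpos)

lemma plogp_ge: assumes "0 \<le> r" "r \<le> 1" shows "-1 \<le> plogp r"
proof (cases "r = 0")
  case False
  then have r: "r > 0" using assms by auto
  have "ln (1/r) \<le> 1/r - 1" using r by (intro ln_le_minus_one) auto
  then have "- ln r \<le> 1/r - 1" using r by (simp add: ln_div)
  then have "r * (- ln r) \<le> r * (1/r - 1)" using r by (intro mult_left_mono) auto
  then show ?thesis using r assms False by (simp add: plogp_def algebra_simps)
qed (simp add: plogp_def)

lemma plogp_abs: assumes "0 \<le> r" shows "\<bar>plogp r\<bar> \<le> 1 + r^2"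
proof (cases "r = 0")
  case False
  then have r: "r > 0" using assms by auto
  have "ln (1/r) \<le> 1/r - 1" using r by (intro ln_le_minus_one) auto
  then have "- ln r \<le> 1/r - 1" using r by (simp add: ln_div)
  then have a: "r * (- ln r) \<le> r * (1/r - 1)" using r by (intro mult_left_mono) auto
  have "ln r \<le> r - 1" using r by (intro ln_le_minus_one)
  then have b: "r * ln r \<le> r * (r - 1)" using r by (intro mult_left_mono) auto
  have c: "0 \<le> r * r" by simp
  have a': "- (r * ln r) \<le> 1 - r" using a r by (simp add: right_diff_distrib)
  have b': "r * ln r \<le> r * r - r" using b by (simp add: right_diff_distrib)
  have "plogp r = r * ln r" using r by (simp add: plogp_def)
  moreover have "- (r * ln r) \<le> 1 + r * r" using a' c r by linarith
  moreover have "r * ln r \<le> 1 + r * r" using b' c r by linarith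
  ultimately show ?thesis by (simp add: power2_eq_square abs_le_iff)
qed (simp add: plogp_def)

lemma plogp_upper_neg: assumes "p > 0" "p/4 \<le> r" "r \<le> 1/2" shows "plogp r \<le> -(p/4) * ln 2"
proof -
  have r: "r > 0" using assms by auto
  have "ln r \<le> ln (1/2)" using r assms by (subst ln_le_cancel_iff) auto
  then have "ln r \<le> - ln 2" by (simp add: ln_div)
  then have "r * ln r \<le> r * (- ln 2)" using r by (intro mult_left_mono) auto
  also have "\<dots> \<le> (p/4) * (- ln 2)" using assms by (intro mult_right_mono_neg) auto
  finally have "r * ln r \<le> (p/4) * (- ln 2)" .
  moreover have "plogp r = r * ln r" using r by (simp add: plogp_def)
  ultimately show ?thesis by simp
qed

lemma plogp_meas: "plogp \<in> borel_measurable borel"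
  unfolding plogp_def by measurable

lemma plogp_mono_integrable:
  fixes g :: "real \<Rightarrow> real"
  assumes "mono g" "\<And>x. 0 \<le> g x" "K \<ge> 0"
  shows "(\<lambda>x. plogp (g x / K)) integrable_on {a..b}"
proof (rule measurable_bounded_by_integrable_imp_integrable)
  have gb: "g \<in> borel_measurable borel" using assms(1) by (rule borel_measurable_mono)
  have "(\<lambda>x. plogp (g x / K)) \<in> borel_measurable borel"
    using gb plogp_meas by measurable
  then have "(\<lambda>x. plogp (g x / K)) \<circ> id \<in> borel_measurable lebesgue"
    by (rule measurable_comp[OF id_borel_measurable_lebesgue])
  then show "(\<lambda>x. plogp (g x / K)) \<in> borel_measurable (lebesgue_on {a..b})"
    by (intro measurable_restrict_space1) (simp add: o_def)
  show "(\<lambda>x. 1 + (g b / K)^2) integrable_on {a..b}" by (rule integrable_const_ivl)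
  show "{a..b} \<in> sets lebesgue" by simp
  fix x assume x: "x \<in> {a..b}"
  have "\<bar>plogp (g x / K)\<bar> \<le> 1 + (g x / K)^2" using assms by (intro plogp_abs) auto
  also have "\<dots> \<le> 1 + (g b / K)^2"
    using x assms by (auto intro!: power_mono divide_right_mono simp: mono_def)
  finally show "norm (plogp (g x / K)) \<le> 1 + (g b / K)^2" by simp
qed


lemma jdf_affine:
  assumes "a1 > 0" "a2 > 0"
  shows "jdf M (\<lambda>\<omega>. a1 * X1 \<omega> + c1) (\<lambda>\<omega>. a2 * X2 \<omega> + c2) t1 t2
       = jdf M X1 X2 ((t1 - c1) / a1) ((t2 - c2) / a2)"
proof -
  have "\<And>x. (a1 * x + c1 \<le> t1) = (x \<le> (t1 - c1) / a1)" using assms by (simp add: pos_le_divide_eq algebra_simps)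
  moreover have "\<And>x. (a2 * x + c2 \<le> t2) = (x \<le> (t2 - c2) / a2)" using assms by (simp add: pos_le_divide_eq algebra_simps)
  ultimately show ?thesis unfolding jdf_def by simp
qed

lemma jdf_neg1:
  assumes "\<forall>\<omega>\<in>space M. X1 \<omega> \<ge> 0" "x < 0"
  shows "jdf M X1 X2 x y = 0"
proof -
  have "{\<omega> \<in> space M. X1 \<omega> \<le> x \<and> X2 \<omega> \<le> y} = {}" using assms by force
  then show ?thesis unfolding jdf_def by (metis measure_empty)
qed

lemma cdcpe1_affine:
  assumes "prob_space M" "X1 \<in> borel_measurable M" "X2 \<in> borel_measurable M"
    "\<forall>\<omega>\<in>space M. X1 \<omega> \<ge> 0" "a > 0" "c \<ge> 0" "t1 \<ge> c" "b > 0"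
  shows "cdcpe1 (jdf M (\<lambda>\<omega>. a * X1 \<omega> + c) (\<lambda>\<omega>. b * X2 \<omega> + e)) t1 t2
       = a * cdcpe1 (jdf M X1 X2) ((t1 - c) / a) ((t2 - e) / b)"
proof -
  define F where "F = jdf M X1 X2"
  define s1 where "s1 = (t1 - c) / a"
  define s2 where "s2 = (t2 - e) / b"
  define h where "h u = plogp (F u s2 / F s1 s2)" for u
  have s1: "s1 \<ge> 0" using assms by (simp add: s1_def)
  have lhs: "(\<lambda>x. plogp (jdf M (\<lambda>\<omega>. a * X1 \<omega> + c) (\<lambda>\<omega>. b * X2 \<omega> + e) x t2 /
                    jdf M (\<lambda>\<omega>. a * X1 \<omega> + c) (\<lambda>\<omega>. b * X2 \<omega> + e) t1 t2))
      = (\<lambda>x. h ((1/a) *\<^sub>R x + (- c / a)))"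
    using assms by (auto simp: jdf_affine h_def F_def s1_def s2_def diff_divide_distrib)
  have hint: "h integrable_on {-c/a..s1}"
    unfolding h_def
    by (rule plogp_mono_integrable)
       (auto simp: F_def mono_def jdf_nonneg intro!: jdf_mono assms(1-3))
  then obtain I where I: "(h has_integral I) (cbox (-c/a) s1)"
    by (auto simp: integrable_on_def)
  have "((\<lambda>x. h ((1/a) *\<^sub>R x + (- c / a))) has_integral (I /\<^sub>R (1/a) ^ DIM(real)))
           (cbox ((-c/a - (-c/a)) /\<^sub>R (1/a)) ((s1 - (-c/a)) /\<^sub>R (1/a)))"
    by (rule has_integral_affinity'[OF I]) (use assms in simp)
  moreover have "(s1 - (-c/a)) /\<^sub>R (1/a) = t1" using assms by (simp add: s1_def field_simps)
  ultimately have "((\<lambda>x. h ((1/a) *\<^sub>R x + (- c / a))) has_integral (a * I)) {0..t1}"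
    by simp
  then have L: "integral {0..t1} (\<lambda>x. h ((1/a) *\<^sub>R x + (- c / a))) = a * I"
    by (rule integral_unique)
  have "integral {-c/a..s1} h = I" using I by (simp add: integral_unique)
  moreover have "integral {-c/a..0} h + integral {0..s1} h = integral {-c/a..s1} h"
  proof -
    have "-c/a \<le> 0" using assms by simp
    from Henstock_Kurzweil_Integration.integral_combine[OF this s1 hint] show ?thesis .
  qed
  moreover have "integral {-c/a..0} h = integral {-c/a..0} (\<lambda>_. 0)"
  proof (rule integral_spike[of "{0}"])
    fix u assume "u \<in> {-c/a..0} - {0}"
    then have "u < 0" by auto
    then show "(\<lambda>_. 0) u = h u" using assms(4) by (simp add: h_def F_def jdf_neg1 plogp_def)
  qed simp
  ultimately have "integral {0..s1} h = I" by simp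
  then have "integral {0..s1} (\<lambda>u. plogp (F u s2 / F s1 s2)) = I" unfolding h_def .
  then show ?thesis
    unfolding cdcpe1_def lhs L by (simp add: h_def F_def s1_def s2_def)
qed


lemma jdf_cont2:
  fixes Y1 Y2 :: "'a \<Rightarrow> real"
  assumes PN: "prob_space N" and m1: "Y1 \<in> borel_measurable N" and m2: "Y2 \<in> borel_measurable N"
    and atom: "\<And>x. measure N {\<omega>\<in>space N. Y2 \<omega> = x} = 0"
  shows "continuous_on {a..b} (\<lambda>x. jdf N Y1 Y2 w x)"
proof -
  interpret prob_space N by fact
  define L where "L = b + 1"
  define f where "f \<omega> = (if Y1 \<omega> \<le> w then Y2 \<omega> else L)" for \<omega>
  have fm: "f \<in> borel_measurable N" unfolding f_def using m1 m2 by measurable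
  define \<nu> where "\<nu> = distr N borel f"
  interpret nu: real_distribution \<nu>
    unfolding real_distribution_def real_distribution_axioms_def \<nu>_def
    using prob_space_distr[OF fm] by simp
  have eq: "cdf \<nu> x = jdf N Y1 Y2 w x" if "x \<in> {a..b}" for x
  proof -
    have "cdf \<nu> x = measure N (f -` {..x} \<inter> space N)"
      unfolding cdf_def \<nu>_def by (rule measure_distr[OF fm]) simp
    moreover have "f -` {..x} \<inter> space N = {\<omega> \<in> space N. Y1 \<omega> \<le> w \<and> Y2 \<omega> \<le> x}"
      using that by (auto simp: f_def L_def split: if_splits)
    ultimately show ?thesis by (simp add: jdf_def)
  qed
  have "isCont (cdf \<nu>) x" if "x \<in> {a..b}" for x
  proof -
    have "measure \<nu> {x} = measure N (f -` {x} \<inter> space N)"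
      unfolding \<nu>_def by (rule measure_distr[OF fm]) simp
    also have "\<dots> \<le> measure N {\<omega>\<in>space N. Y2 \<omega> = x}"
    proof (rule finite_measure_mono)
      show "f -` {x} \<inter> space N \<subseteq> {\<omega>\<in>space N. Y2 \<omega> = x}"
        using that by (auto simp: f_def L_def split: if_splits)
      show "{\<omega>\<in>space N. Y2 \<omega> = x} \<in> events" using m2 by measurable
    qed
    finally have "measure \<nu> {x} = 0" using atom[of x] by (simp add: measure_nonneg antisym)
    then show ?thesis by (simp add: nu.isCont_cdf)
  qed
  then have "continuous_on {a..b} (cdf \<nu>)" by (intro continuous_at_imp_continuous_on) auto
  then show ?thesis by (rule continuous_on_cong[THEN iffD1, rotated 2]) (auto simp: eq)
qed

lemma jdf_zero2:
  fixes Y1 Y2 :: "'a \<Rightarrow> real"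
  assumes PN: "prob_space N" and m2: "Y2 \<in> borel_measurable N"
    and nn: "\<forall>\<omega>\<in>space N. Y2 \<omega> \<ge> 0"
    and atom: "\<And>x. measure N {\<omega>\<in>space N. Y2 \<omega> = x} = 0"
  shows "jdf N Y1 Y2 w 0 = 0"
proof -
  interpret prob_space N by fact
  have "jdf N Y1 Y2 w 0 \<le> measure N {\<omega>\<in>space N. Y2 \<omega> = 0}"
    unfolding jdf_def
  proof (rule finite_measure_mono)
    show "{\<omega> \<in> space N. Y1 \<omega> \<le> w \<and> Y2 \<omega> \<le> 0} \<subseteq> {\<omega>\<in>space N. Y2 \<omega> = 0}"
      using nn by force
    show "{\<omega>\<in>space N. Y2 \<omega> = 0} \<in> events" using m2 by measurable
  qed
  then show ?thesis using atom[of 0] jdf_nonneg[of N Y1 Y2 w 0] by simp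
qed


lemma K2:
  fixes X1 X2 :: "'a \<Rightarrow> real" and Y1 Y2 :: "'b \<Rightarrow> real"
  assumes PM: "prob_space M" and PN: "prob_space N"
    and mX1: "X1 \<in> borel_measurable M" and mX2: "X2 \<in> borel_measurable M"
    and mY1: "Y1 \<in> borel_measurable N" and mY2: "Y2 \<in> borel_measurable N"
    and nn: "\<forall>\<omega>\<in>space N. Y2 \<omega> \<ge> 0"
    and atom: "\<And>x. measure N {\<omega>\<in>space N. Y2 \<omega> = x} = 0"
    and w1: "w1 > 0" and w2: "w2 > 0"
    and F0: "jdf M X1 X2 w1 w2 = 0" and Gp: "jdf N Y1 Y2 w1 w2 > 0"
    and FT: "jdf M X1 X2 w1 T > 0"
    and le: "cdcpe_le (jdf M X1 X2) (jdf N Y1 Y2)"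
  shows False
proof -
  define F where "F x = jdf M X1 X2 w1 x" for x
  define G where "G x = jdf N Y1 Y2 w1 x" for x
  have Fmono: "x \<le> y \<Longrightarrow> F x \<le> F y" for x y
    unfolding F_def by (rule jdf_mono[OF PM mX1 mX2]) auto
  have Gmono: "x \<le> y \<Longrightarrow> G x \<le> G y" for x y
    unfolding G_def by (rule jdf_mono[OF PN mY1 mY2]) auto
  have F0': "F x \<ge> 0" for x by (simp add: F_def jdf_nonneg)
  have G0': "G x \<ge> 0" for x by (simp add: G_def jdf_nonneg)
  have G1: "G x \<le> 1" for x unfolding G_def by (rule jdf_le1[OF PN])
  define S where "S = {t. F t > 0}"
  have TS: "T \<in> S" using FT by (simp add: S_def F_def)
  have Sw2: "t \<in> S \<Longrightarrow> w2 \<le> t" for t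
  proof (rule ccontr)
    assume "t \<in> S" "\<not> w2 \<le> t"
    then have "F t \<le> F w2" by (intro Fmono) auto
    then show False using \<open>t \<in> S\<close> F0 by (simp add: S_def F_def)
  qed
  define m where "m = Inf S"
  have bdd: "bdd_below S" using Sw2 by (auto simp: bdd_below_def)
  have mw2: "w2 \<le> m" unfolding m_def using TS Sw2 by (intro cInf_greatest) auto
  have Fbelow: "F x = 0" if "x < m" for x
  proof (rule ccontr)
    assume "F x \<noteq> 0"
    then have "x \<in> S" using F0'[of x] by (simp add: S_def)
    then have "m \<le> x" unfolding m_def using bdd by (rule cInf_lower)
    then show False using that by simp
  qed
  have Fabove: "F t > 0" if tm': "t > m" for t
  proof -
    have "\<exists>s\<in>S. s < t" using cInf_less_iff[of S t] tm' TS bdd unfolding m_def by auto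
    then obtain s where "s \<in> S" "s < t" by blast
    then show ?thesis using Fmono[of s t] by (simp add: S_def)
  qed
  define p where "p = G w2"
  have p: "p > 0" using Gp by (simp add: p_def G_def)
  have Gm: "p \<le> G m" unfolding p_def using mw2 by (rule Gmono)
  have cont: "continuous_on {0..m} G" unfolding G_def
    by (rule jdf_cont2[OF PN mY1 mY2 atom])
  have G00: "G 0 = 0" unfolding G_def by (rule jdf_zero2[OF PN mY2 nn atom])
  have m0: "0 \<le> m" using mw2 w2 by simp
  obtain \<alpha> where \<alpha>: "0 \<le> \<alpha>" "\<alpha> \<le> m" "G \<alpha> = p/4"
    using IVT'[of G 0 "p/4" m] G00 Gm p m0 cont by auto
  obtain \<beta> where \<beta>: "0 \<le> \<beta>" "\<beta> \<le> m" "G \<beta> = p/2"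
    using IVT'[of G 0 "p/2" m] G00 Gm p m0 cont by auto
  have \<alpha>\<beta>: "\<alpha> < \<beta>"
  proof (rule ccontr)
    assume "\<not> \<alpha> < \<beta>"
    then have "G \<beta> \<le> G \<alpha>" by (intro Gmono) auto
    then show False using \<alpha> \<beta> p by simp
  qed
  define \<kappa> where "\<kappa> = (\<beta> - \<alpha>) * ((p/4) * ln 2)"
  have \<kappa>: "\<kappa> > 0" using \<alpha>\<beta> p by (simp add: \<kappa>_def)
  define t where "t = m + \<kappa>/2"
  have tm: "t > m" using \<kappa> by (simp add: t_def)
  have Gt: "p \<le> G t" "G t > 0" using Gm Gmono[of m t] tm p by auto
  define g where "g x = plogp (G x / G t)" for x
  have gint: "g integrable_on {a..b}" for a b
    unfolding g_def by (rule plogp_mono_integrable) (auto simp: mono_def Gmono G0')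
  have gle0: "g x \<le> 0" if "x \<le> t" for x
    unfolding g_def using Gmono[OF that] Gt G0'[of x] by (intro plogp_le0) auto
  have "integral {0..t} g = integral {0..\<alpha>} g + integral {\<alpha>..t} g"
    using Henstock_Kurzweil_Integration.integral_combine[of 0 \<alpha> t g] \<alpha> tm gint by simp
  moreover have "integral {\<alpha>..t} g = integral {\<alpha>..\<beta>} g + integral {\<beta>..t} g"
    using Henstock_Kurzweil_Integration.integral_combine[of \<alpha> \<beta> t g] \<alpha>\<beta> \<beta> tm gint by simp
  moreover have "integral {0..\<alpha>} g \<le> integral {0..\<alpha>} (\<lambda>_. 0)"
    by (rule integral_le[OF gint]) (use gle0 \<alpha> tm in auto)
  moreover have "integral {\<beta>..t} g \<le> integral {\<beta>..t} (\<lambda>_. 0)"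
    by (rule integral_le[OF gint]) (use gle0 in auto)
  moreover have "integral {\<alpha>..\<beta>} g \<le> integral {\<alpha>..\<beta>} (\<lambda>_. -(p/4) * ln 2)"
  proof (rule integral_le[OF gint])
    fix x assume x: "x \<in> {\<alpha>..\<beta>}"
    have Gx: "p/4 \<le> G x" "G x \<le> p/2" using Gmono[of \<alpha> x] Gmono[of x \<beta>] x \<alpha> \<beta> by auto
    have r1: "p/4 \<le> G x / G t"
    proof -
      have "p/4 \<le> G x" by (rule Gx(1))
      also have "\<dots> \<le> G x / G t" using Gt G1[of t] G0'[of x] by (simp add: le_divide_eq mult_left_le)
      finally show ?thesis .
    qed
    have r2: "G x / G t \<le> 1/2"
      using Gx Gt p by (simp add: divide_le_eq)
    show "g x \<le> -(p/4) * ln 2" unfolding g_def by (rule plogp_upper_neg[OF p r1 r2])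
  qed auto
  ultimately have "integral {0..t} g \<le> (\<beta> - \<alpha>) * (-(p/4) * ln 2)"
    using \<alpha>\<beta> by (simp add: algebra_simps)
  then have lowN: "\<kappa> \<le> cdcpe2 (jdf N Y1 Y2) w1 t"
    unfolding cdcpe2_def \<kappa>_def g_def G_def by simp
  define f where "f x = plogp (F x / F t)" for x
  have fint: "f integrable_on {a..b}" for a b
    unfolding f_def by (rule plogp_mono_integrable) (auto simp: mono_def Fmono F0')
  have Ft: "F t > 0" using Fabove tm by simp
  have "integral {0..t} f = integral {0..m} f + integral {m..t} f"
    using Henstock_Kurzweil_Integration.integral_combine[of 0 m t f] m0 tm fint by simp
  moreover have "integral {0..m} f = integral {0..m} (\<lambda>_. 0)"
  proof (rule integral_spike[of "{m}"])
    fix u assume "u \<in> {0..m} - {m}"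
    then have "u < m" by auto
    then show "(\<lambda>_. 0) u = f u" by (simp add: f_def Fbelow plogp_def)
  qed simp
  moreover have "integral {m..t} (\<lambda>_. -1) \<le> integral {m..t} f"
  proof (rule integral_le[OF _ fint])
    fix x assume x: "x \<in> {m..t}"
    show "-1 \<le> f x" unfolding f_def
      using Fmono[of x t] x Ft F0'[of x] by (intro plogp_ge) auto
  qed auto
  ultimately have "-(t - m) \<le> integral {0..t} f" using tm by simp
  then have upM: "cdcpe2 (jdf M X1 X2) w1 t \<le> t - m"
    unfolding cdcpe2_def f_def F_def by simp
  have "cdcpe2 (jdf N Y1 Y2) w1 t \<le> cdcpe2 (jdf M X1 X2) w1 t"
    using le w1 tm m0 Ft Gt unfolding cdcpe_le_def cdcpe_defined_def F_def G_def by auto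
  then have "\<kappa> \<le> t - m" using lowN upM by simp
  then show False using \<kappa> by (simp add: t_def)
qed


lemma jdf_swap_fun: "(\<lambda>a b. jdf M X1 X2 b a) = jdf M X2 X1"
  by (intro ext) (rule jdf_swap)

lemma Key:
  fixes X1 X2 :: "'a \<Rightarrow> real" and Y1 Y2 :: "'b \<Rightarrow> real"
  assumes PM: "prob_space M" and PN: "prob_space N"
    and mX1: "X1 \<in> borel_measurable M" and mX2: "X2 \<in> borel_measurable M"
    and mY1: "Y1 \<in> borel_measurable N" and mY2: "Y2 \<in> borel_measurable N"
    and nn: "\<forall>\<omega>\<in>space N. Y1 \<omega> \<ge> 0 \<and> Y2 \<omega> \<ge> 0"
    and atom1: "\<And>x. measure N {\<omega>\<in>space N. Y1 \<omega> = x} = 0"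
    and atom2: "\<And>x. measure N {\<omega>\<in>space N. Y2 \<omega> = x} = 0"
    and u: "u1 > 0" "u2 > 0" "u1 \<le> v1" "u2 \<le> v2"
    and Gp: "jdf N Y1 Y2 u1 u2 > 0" and Fv: "jdf M X1 X2 v1 v2 > 0"
    and le: "cdcpe_le (jdf M X1 X2) (jdf N Y1 Y2)"
  shows "jdf M X1 X2 u1 u2 > 0"
proof (rule ccontr)
  assume "\<not> jdf M X1 X2 u1 u2 > 0"
  then have F0: "jdf M X1 X2 u1 u2 = 0" using jdf_nonneg[of M X1 X2 u1 u2] by simp
  show False
  proof (cases "jdf M X1 X2 u1 v2 > 0")
    case True
    show False
      by (rule K2[OF PM PN mX1 mX2 mY1 mY2 _ atom2 u(1,2) F0 Gp True le]) (use nn in auto)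
  next
    case False
    then have F1: "jdf M X2 X1 v2 u1 = 0" using jdf_nonneg[of M X1 X2 u1 v2] jdf_swap[of M X1 X2] by simp
    have "jdf N Y1 Y2 u1 u2 \<le> jdf N Y1 Y2 u1 v2" by (rule jdf_mono[OF PN mY1 mY2]) (use u in auto)
    then have G1: "jdf N Y2 Y1 v2 u1 > 0" using Gp jdf_swap[of N Y1 Y2] by simp
    have FT: "jdf M X2 X1 v2 v1 > 0" using Fv jdf_swap[of M X1 X2] by simp
    have le': "cdcpe_le (jdf M X2 X1) (jdf N Y2 Y1)"
      using cdcpe_le_swap[OF le] by (simp add: jdf_swap_fun)
    show False
      by (rule K2[OF PM PN mX2 mX1 mY2 mY1 _ atom1 _ u(1) F1 G1 FT le']) (use nn u in auto)
  qed
qed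

lemma cdcpe2_affine:
  assumes "prob_space M" "X1 \<in> borel_measurable M" "X2 \<in> borel_measurable M"
    "\<forall>\<omega>\<in>space M. X2 \<omega> \<ge> 0" "b > 0" "e \<ge> 0" "t2 \<ge> e" "a > 0"
  shows "cdcpe2 (jdf M (\<lambda>\<omega>. a * X1 \<omega> + c) (\<lambda>\<omega>. b * X2 \<omega> + e)) t1 t2
       = b * cdcpe2 (jdf M X1 X2) ((t1 - c) / a) ((t2 - e) / b)"
  using cdcpe1_affine[OF assms(1,3,2,4,5,6,7,8), of c t1]
  by (simp add: cdcpe2_swap jdf_swap_fun)


theorem theorem3p8:
  fixes M :: "'a measure" and N :: "'b measure"
    and X1 X2 :: "'a \<Rightarrow> real" and X1' X2' :: "'b \<Rightarrow> real"
    and a1 a2 c1 c2 d1 d2 :: real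
  assumes "prob_space M" and "prob_space N"
    and "X1 \<in> borel_measurable M" "X2 \<in> borel_measurable M"
    and "X1' \<in> borel_measurable N" "X2' \<in> borel_measurable N"
    and "\<forall>\<omega>\<in>space M. X1 \<omega> \<ge> 0 \<and> X2 \<omega> \<ge> 0"
    and "\<forall>\<omega>\<in>space N. X1' \<omega> \<ge> 0 \<and> X2' \<omega> \<ge> 0"
    and "absolutely_continuous lborel (distr M lborel (\<lambda>\<omega>. (X1 \<omega>, X2 \<omega>)))"
    and "absolutely_continuous lborel (distr N lborel (\<lambda>\<omega>. (X1' \<omega>, X2' \<omega>)))"
    and "a1 > 0" "a2 > 0" "c1 > 0" "c2 > 0" "d1 \<ge> c1" "d2 \<ge> c2"
    and "cdcpe_le (jdf M X1 X2) (jdf N X1' X2')"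
    and "cdcpe_increasing (jdf M X1 X2) \<or> cdcpe_increasing (jdf N X1' X2')"
  shows "\<forall>t1 t2. t1 \<ge> d1 \<longrightarrow> t2 \<ge> d2 \<longrightarrow>
      cdcpe_defined (jdf M (\<lambda>\<omega>. a1 * X1 \<omega> + c1) (\<lambda>\<omega>. a2 * X2 \<omega> + c2)) t1 t2 \<longrightarrow>
      cdcpe_defined (jdf N (\<lambda>\<omega>. a1 * X1' \<omega> + d1) (\<lambda>\<omega>. a2 * X2' \<omega> + d2)) t1 t2 \<longrightarrow>
      cdcpe1 (jdf N (\<lambda>\<omega>. a1 * X1' \<omega> + d1) (\<lambda>\<omega>. a2 * X2' \<omega> + d2)) t1 t2
        \<le> cdcpe1 (jdf M (\<lambda>\<omega>. a1 * X1 \<omega> + c1) (\<lambda>\<omega>. a2 * X2 \<omega> + c2)) t1 t2 \<and>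
      cdcpe2 (jdf N (\<lambda>\<omega>. a1 * X1' \<omega> + d1) (\<lambda>\<omega>. a2 * X2' \<omega> + d2)) t1 t2
        \<le> cdcpe2 (jdf M (\<lambda>\<omega>. a1 * X1 \<omega> + c1) (\<lambda>\<omega>. a2 * X2 \<omega> + c2)) t1 t2"
proof (intro allI impI)
  note PM = assms(1) and PN = assms(2) and mX1 = assms(3) and mX2 = assms(4)
    and mY1 = assms(5) and mY2 = assms(6) and nnX = assms(7) and nnY = assms(8)
    and le = assms(17) and inc = assms(18)
  have atom1: "\<And>x. measure N {\<omega>\<in>space N. X1' \<omega> = x} = 0"
    and atom2: "\<And>x. measure N {\<omega>\<in>space N. X2' \<omega> = x} = 0"
    using atom_null[OF PN mY1 mY2 assms(10)] by auto
  fix t1 t2 assume t1: "t1 \<ge> d1" and t2: "t2 \<ge> d2"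
    and dG: "cdcpe_defined (jdf M (\<lambda>\<omega>. a1 * X1 \<omega> + c1) (\<lambda>\<omega>. a2 * X2 \<omega> + c2)) t1 t2"
    and dG': "cdcpe_defined (jdf N (\<lambda>\<omega>. a1 * X1' \<omega> + d1) (\<lambda>\<omega>. a2 * X2' \<omega> + d2)) t1 t2"
  define F where "F = jdf M X1 X2"
  define F' where "F' = jdf N X1' X2'"
  define s1 where "s1 = (t1 - c1) / a1"
  define s2 where "s2 = (t2 - c2) / a2"
  define r1 where "r1 = (t1 - d1) / a1"
  define r2 where "r2 = (t2 - d2) / a2"
  have Fs: "F s1 s2 > 0" using dG assms(11,12)
    by (simp add: cdcpe_defined_def jdf_affine F_def s1_def s2_def)
  have F'r: "F' r1 r2 > 0" using dG' assms(11,12)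
    by (simp add: cdcpe_defined_def jdf_affine F'_def r1_def r2_def)
  have rs1: "r1 \<le> s1" unfolding r1_def s1_def using assms(11,15) by (intro divide_right_mono) auto
  have rs2: "r2 \<le> s2" unfolding r2_def s2_def using assms(12,16) by (intro divide_right_mono) auto
  have r1nn: "r1 \<ge> 0" unfolding r1_def using t1 assms(11) by simp
  have r2nn: "r2 \<ge> 0" unfolding r2_def using t2 assms(12) by simp
  have r1p: "r1 > 0"
  proof (rule ccontr)
    assume "\<not> r1 > 0"
    then have "r1 = 0" using r1nn by simp
    moreover have "jdf N X2' X1' r2 0 = 0"
      by (rule jdf_zero2[OF PN mY1 _ atom1]) (use nnY in auto)
    ultimately show False using F'r jdf_swap[of N X1' X2'] by (simp add: F'_def)
  qed
  have r2p: "r2 > 0"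
  proof (rule ccontr)
    assume "\<not> r2 > 0"
    then have "r2 = 0" using r2nn by simp
    moreover have "jdf N X1' X2' r1 0 = 0"
      by (rule jdf_zero2[OF PN mY2 _ atom2]) (use nnY in auto)
    ultimately show False using F'r by (simp add: F'_def)
  qed
  have s1p: "s1 > 0" using r1p rs1 by simp
  have s2p: "s2 > 0" using r2p rs2 by simp
  have Fm: "x1 \<le> y1 \<Longrightarrow> x2 \<le> y2 \<Longrightarrow> F x1 x2 \<le> F y1 y2" for x1 x2 y1 y2
    unfolding F_def by (rule jdf_mono[OF PM mX1 mX2])
  have F'm: "x1 \<le> y1 \<Longrightarrow> x2 \<le> y2 \<Longrightarrow> F' x1 x2 \<le> F' y1 y2" for x1 x2 y1 y2
    unfolding F'_def by (rule jdf_mono[OF PN mY1 mY2])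
  have e1: "cdcpe1 (jdf M (\<lambda>\<omega>. a1 * X1 \<omega> + c1) (\<lambda>\<omega>. a2 * X2 \<omega> + c2)) t1 t2 = a1 * cdcpe1 F s1 s2"
    unfolding F_def s1_def s2_def
    by (rule cdcpe1_affine[OF PM mX1 mX2]) (use nnX assms(11-16) t1 in auto)
  have e2: "cdcpe2 (jdf M (\<lambda>\<omega>. a1 * X1 \<omega> + c1) (\<lambda>\<omega>. a2 * X2 \<omega> + c2)) t1 t2 = a2 * cdcpe2 F s1 s2"
    unfolding F_def s1_def s2_def
    by (rule cdcpe2_affine[OF PM mX1 mX2]) (use nnX assms(11-16) t2 in auto)
  have e1': "cdcpe1 (jdf N (\<lambda>\<omega>. a1 * X1' \<omega> + d1) (\<lambda>\<omega>. a2 * X2' \<omega> + d2)) t1 t2 = a1 * cdcpe1 F' r1 r2"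
    unfolding F'_def r1_def r2_def
    by (rule cdcpe1_affine[OF PN mY1 mY2]) (use nnY assms(11-16) t1 in auto)
  have e2': "cdcpe2 (jdf N (\<lambda>\<omega>. a1 * X1' \<omega> + d1) (\<lambda>\<omega>. a2 * X2' \<omega> + d2)) t1 t2 = a2 * cdcpe2 F' r1 r2"
    unfolding F'_def r1_def r2_def
    by (rule cdcpe2_affine[OF PN mY1 mY2]) (use nnY assms(11-16) t2 in auto)
  have le': "cdcpe_defined F x y \<Longrightarrow> cdcpe_defined F' x y \<Longrightarrow>
      cdcpe1 F' x y \<le> cdcpe1 F x y \<and> cdcpe2 F' x y \<le> cdcpe2 F x y" for x y
    using le unfolding cdcpe_le_def F_def F'_def by blast
  have main: "cdcpe1 F' r1 r2 \<le> cdcpe1 F s1 s2 \<and> cdcpe2 F' r1 r2 \<le> cdcpe2 F s1 s2"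
    using inc
  proof
    assume incF: "cdcpe_increasing (jdf M X1 X2)"
    have Fr: "F r1 r2 > 0"
      unfolding F_def
      by (rule Key[OF PM PN mX1 mX2 mY1 mY2 _ atom1 atom2 r1p r2p rs1 rs2])
         (use nnY F'r Fs le in \<open>auto simp: F_def F'_def\<close>)
    have Fsr: "F s1 r2 > 0" using Fr Fm[of r1 s1 r2 r2] rs1 by simp
    have A: "cdcpe1 F' r1 r2 \<le> cdcpe1 F r1 r2 \<and> cdcpe2 F' r1 r2 \<le> cdcpe2 F r1 r2"
      using le' Fr F'r r1p r2p by (simp add: cdcpe_defined_def)
    have B: "cdcpe1 F r1 r2 \<le> cdcpe1 F s1 r2 \<and> cdcpe2 F r1 r2 \<le> cdcpe2 F s1 r2"
      using incF rs1 Fr Fsr r1p r2p s1p unfolding cdcpe_increasing_def cdcpe_defined_def F_def by blast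
    have C: "cdcpe1 F s1 r2 \<le> cdcpe1 F s1 s2 \<and> cdcpe2 F s1 r2 \<le> cdcpe2 F s1 s2"
      using incF rs2 Fs Fsr r2p s1p s2p unfolding cdcpe_increasing_def cdcpe_defined_def F_def by blast
    show ?thesis using A B C by linarith
  next
    assume incF': "cdcpe_increasing (jdf N X1' X2')"
    have F'sr: "F' s1 r2 > 0" using F'r F'm[of r1 s1 r2 r2] rs1 by simp
    have F's: "F' s1 s2 > 0" using F'sr F'm[of s1 s1 r2 s2] rs2 by simp
    have A: "cdcpe1 F' r1 r2 \<le> cdcpe1 F' s1 r2 \<and> cdcpe2 F' r1 r2 \<le> cdcpe2 F' s1 r2"
      using incF' rs1 F'r F'sr r1p r2p s1p unfolding cdcpe_increasing_def cdcpe_defined_def F'_def by blast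
    have B: "cdcpe1 F' s1 r2 \<le> cdcpe1 F' s1 s2 \<and> cdcpe2 F' s1 r2 \<le> cdcpe2 F' s1 s2"
      using incF' rs2 F's F'sr r2p s1p s2p unfolding cdcpe_increasing_def cdcpe_defined_def F'_def by blast
    have C: "cdcpe1 F' s1 s2 \<le> cdcpe1 F s1 s2 \<and> cdcpe2 F' s1 s2 \<le> cdcpe2 F s1 s2"
      using le' Fs F's s1p s2p by (simp add: cdcpe_defined_def)
    show ?thesis using A B C by linarith
  qed
  show "cdcpe1 (jdf N (\<lambda>\<omega>. a1 * X1' \<omega> + d1) (\<lambda>\<omega>. a2 * X2' \<omega> + d2)) t1 t2
        \<le> cdcpe1 (jdf M (\<lambda>\<omega>. a1 * X1 \<omega> + c1) (\<lambda>\<omega>. a2 * X2 \<omega> + c2)) t1 t2 \<and>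
      cdcpe2 (jdf N (\<lambda>\<omega>. a1 * X1' \<omega> + d1) (\<lambda>\<omega>. a2 * X2' \<omega> + d2)) t1 t2
        \<le> cdcpe2 (jdf M (\<lambda>\<omega>. a1 * X1 \<omega> + c1) (\<lambda>\<omega>. a2 * X2 \<omega> + c2)) t1 t2"
    unfolding e1 e2 e1' e2' using main assms(11,12) by (auto intro: mult_left_mono)
qed

end
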